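(* For every $n\ge 4$, $\beta(P_\infty\,\Box\, K_n)=n-1$, and $S=\{(0,0),(0,1),\dots,(0,n-2)\}$ is a metric basis of $P_\infty\,\Box\, K_n$.
   Context: $P_\infty$ has vertex set $\mathbb N=\{0,1,2,\dots\}$ with $i,j$ adjacent iff $|i-j|=1$. $K_n$ is the complete graph on vertex set $\{0,1,\dots,n-1\}$. The cartesian product $G\Box H$ has vertex set $V(G)\times V(H)$, where $(a,v)$ is adjacent to $(b,w)$ iff either $a=b$ and $vw\in E(H)$, or $v=w$ and $ab\in E(G)$. A vertex $x$ resolves $u,v$ if $d(u,x)\ne d(v,x)$ (shortest-path distance); a resolving set is a set of vertices resolving every pair of distinct vertices; $\beta$ is the minimum cardinality of a resolving set ($\infty$ if none is finite), and a metric basis is a resolving set of cardinality $\beta$. *)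

theory Defs
  imports Main "HOL-Library.Extended_Nat"
begin

text \<open>A graph is given by a vertex set V and an adjacency relation E (intended
symmetric and irreflexive on V).\<close>

definition is_walk :: "'a set \<Rightarrow> ('a \<Rightarrow> 'a \<Rightarrow> bool) \<Rightarrow> 'a list \<Rightarrow> bool" where
  "is_walk V E ws \<longleftrightarrow> ws \<noteq> [] \<and> set ws \<subseteq> V \<and>
     (\<forall>i. Suc i < length ws \<longrightarrow> E (ws ! i) (ws ! Suc i))"

text \<open>Shortest-path distance (number of edges), \<infinity> if not connected.\<close>
definition gdist :: "'a set \<Rightarrow> ('a \<Rightarrow> 'a \<Rightarrow> bool) \<Rightarrow> 'a \<Rightarrow> 'a \<Rightarrow> enat" where
  "gdist V E u v = (INF ws \<in> {ws. is_walk V E ws \<and> hd ws = u \<and> last ws = v}.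
                      enat (length ws - 1))"

definition resolves :: "'a set \<Rightarrow> ('a \<Rightarrow> 'a \<Rightarrow> bool) \<Rightarrow> 'a \<Rightarrow> 'a \<Rightarrow> 'a \<Rightarrow> bool" where
  "resolves V E x u v \<longleftrightarrow> gdist V E u x \<noteq> gdist V E v x"

definition resolving_set :: "'a set \<Rightarrow> ('a \<Rightarrow> 'a \<Rightarrow> bool) \<Rightarrow> 'a set \<Rightarrow> bool" where
  "resolving_set V E W \<longleftrightarrow> W \<subseteq> V \<and>
     (\<forall>u\<in>V. \<forall>v\<in>V. u \<noteq> v \<longrightarrow> (\<exists>x\<in>W. resolves V E x u v))"

text \<open>Metric dimension beta; \<infinity> if no finite resolving set exists.\<close>
definition metric_dim :: "'a set \<Rightarrow> ('a \<Rightarrow> 'a \<Rightarrow> bool) \<Rightarrow> enat" where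
  "metric_dim V E = (INF W \<in> {W. resolving_set V E W \<and> finite W}. enat (card W))"

definition metric_basis :: "'a set \<Rightarrow> ('a \<Rightarrow> 'a \<Rightarrow> bool) \<Rightarrow> 'a set \<Rightarrow> bool" where
  "metric_basis V E W \<longleftrightarrow> resolving_set V E W \<and> finite W \<and> enat (card W) = metric_dim V E"

definition box_V :: "'a set \<Rightarrow> 'b set \<Rightarrow> ('a \<times> 'b) set" where
  "box_V VG VH = VG \<times> VH"

definition box_E :: "('a \<Rightarrow> 'a \<Rightarrow> bool) \<Rightarrow> ('b \<Rightarrow> 'b \<Rightarrow> bool) \<Rightarrow> ('a \<times> 'b) \<Rightarrow> ('a \<times> 'b) \<Rightarrow> bool" where
  "box_E EG EH p q \<longleftrightarrow> (fst p = fst q \<and> EH (snd p) (snd q)) \<or> (snd p = snd q \<and> EG (fst p) (fst q))"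

definition Pinf_V :: "nat set" where "Pinf_V = UNIV"
definition Pinf_E :: "nat \<Rightarrow> nat \<Rightarrow> bool" where "Pinf_E i j \<longleftrightarrow> i = j + 1 \<or> j = i + 1"

definition K_V :: "nat \<Rightarrow> nat set" where "K_V n = {0..<n}"
definition K_E :: "nat \<Rightarrow> nat \<Rightarrow> bool" where "K_E i j \<longleftrightarrow> i \<noteq> j"

end

theory Submission
  imports Defs
begin

definition pd :: "nat \<times> nat \<Rightarrow> nat \<times> nat \<Rightarrow> nat" where
  "pd p q = (max (fst p) (fst q) - min (fst p) (fst q)) + (if snd p = snd q then 0 else 1)"

abbreviation "GE \<equiv> box_E Pinf_E K_E"

lemma GE_iff: "GE p q \<longleftrightarrow> (fst p = fst q \<and> snd p \<noteq> snd q) \<or> (snd p = snd q \<and> (fst p = fst q + 1 \<or> fst q = fst p + 1))"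
  by (auto simp: box_E_def Pinf_E_def K_E_def)

lemma GE_pd: "GE p q \<Longrightarrow> pd p r \<le> 1 + pd q r"
  unfolding GE_iff pd_def by auto

lemma walk_tl:
  assumes "is_walk V E (w # ws)" "ws \<noteq> []"
  shows "is_walk V E ws \<and> E w (hd ws)"
proof -
  have A: "\<And>i. Suc i < Suc (length ws) \<Longrightarrow> E ((w#ws)!i) ((w#ws)! Suc i)" "set ws \<subseteq> V"
    using assms(1) by (auto simp: is_walk_def)
  have "E w (hd ws)" using A(1)[of 0] assms(2) by (cases ws) auto
  moreover have "E (ws!i) (ws!Suc i)" if "Suc i < length ws" for i
    using A(1)[of "Suc i"] that by simp
  ultimately show ?thesis using assms(2) A(2) by (auto simp: is_walk_def)
qed

lemma walk_lower: "is_walk V GE ws \<Longrightarrow> pd (hd ws) (last ws) \<le> length ws - 1"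
proof (induction ws)
  case Nil
  then show ?case by (simp add: is_walk_def)
next
  case (Cons w ws)
  show ?case
  proof (cases "ws = []")
    case True
    then show ?thesis by (simp add: pd_def)
  next
    case False
    with walk_tl[OF Cons.prems] have "is_walk V GE ws" "GE w (hd ws)" by auto
    with Cons.IH have "pd (hd ws) (last ws) \<le> length ws - 1" by auto
    moreover have "pd w (last ws) \<le> 1 + pd (hd ws) (last ws)" using GE_pd \<open>GE w (hd ws)\<close> by blast
    moreover obtain k where "length ws = Suc k" using False by (cases ws) auto
    ultimately show ?thesis using False by simp
  qed
qed

lemma walk_snoc:
  assumes "is_walk V E ws" "v \<in> V" "E (last ws) v"
  shows "is_walk V E (ws @ [v])"
proof -
  have ne: "ws \<noteq> []" and S: "set ws \<subseteq> V"
    and A: "\<And>i. Suc i < length ws \<Longrightarrow> E (ws!i) (ws!Suc i)"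
    using assms(1) by (auto simp: is_walk_def)
  have "E ((ws @ [v]) ! i) ((ws @ [v]) ! Suc i)" if i: "Suc i < length (ws @ [v])" for i
  proof (cases "Suc i < length ws")
    case True
    then show ?thesis using A[OF True] by (simp add: nth_append)
  next
    case False
    then have "Suc i = length ws" using i by simp
    moreover have "ws ! i = last ws" using last_conv_nth[OF ne] \<open>Suc i = length ws\<close> by (metis diff_Suc_1)
    ultimately show ?thesis using assms(3) by (simp add: nth_append)
  qed
  then show ?thesis using ne S assms(2) by (auto simp: is_walk_def)
qed

lemma walk_up:
  assumes "a \<le> b" "x < n"
  shows "is_walk (box_V Pinf_V (K_V n)) GE (map (\<lambda>i. (a + i, x)) [0..<Suc (b - a)])"
  unfolding is_walk_def
proof (intro conjI allI impI)
  show "map (\<lambda>i. (a + i, x)) [0..<Suc (b - a)] \<noteq> []" by (simp del: upt_Suc)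
  show "set (map (\<lambda>i. (a + i, x)) [0..<Suc (b - a)]) \<subseteq> box_V Pinf_V (K_V n)"
    using assms by (auto simp del: upt_Suc simp: box_V_def Pinf_V_def K_V_def)
  fix i assume "Suc i < length (map (\<lambda>i. (a + i, x)) [0..<Suc (b - a)])"
  then have i: "Suc i < Suc (b - a)" by (simp del: upt_Suc)
  have e1: "map (\<lambda>i. (a + i, x)) [0..<Suc (b - a)] ! i = (a + i, x)"
    using i by (simp del: upt_Suc)
  have e2: "map (\<lambda>i. (a + i, x)) [0..<Suc (b - a)] ! Suc i = (a + Suc i, x)"
    using i by (simp del: upt_Suc add: nth_map)
  show "GE (map (\<lambda>i. (a + i, x)) [0..<Suc (b - a)] ! i) (map (\<lambda>i. (a + i, x)) [0..<Suc (b - a)] ! Suc i)"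
    unfolding e1 e2 GE_iff by simp
qed

lemma walk_down:
  assumes "b \<le> a" "x < n"
  shows "is_walk (box_V Pinf_V (K_V n)) GE (map (\<lambda>i. (a - i, x)) [0..<Suc (a - b)])"
  unfolding is_walk_def
proof (intro conjI allI impI)
  show "map (\<lambda>i. (a - i, x)) [0..<Suc (a - b)] \<noteq> []" by (simp del: upt_Suc)
  show "set (map (\<lambda>i. (a - i, x)) [0..<Suc (a - b)]) \<subseteq> box_V Pinf_V (K_V n)"
    using assms by (auto simp del: upt_Suc simp: box_V_def Pinf_V_def K_V_def)
  fix i assume "Suc i < length (map (\<lambda>i. (a - i, x)) [0..<Suc (a - b)])"
  then have i: "Suc i < Suc (a - b)" by (simp del: upt_Suc)
  have e1: "map (\<lambda>i. (a - i, x)) [0..<Suc (a - b)] ! i = (a - i, x)"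
    using i by (simp del: upt_Suc)
  have e2: "map (\<lambda>i. (a - i, x)) [0..<Suc (a - b)] ! Suc i = (a - Suc i, x)"
    using i by (simp del: upt_Suc add: nth_map)
  have "a - i = (a - Suc i) + 1" using i by simp
  then show "GE (map (\<lambda>i. (a - i, x)) [0..<Suc (a - b)] ! i) (map (\<lambda>i. (a - i, x)) [0..<Suc (a - b)] ! Suc i)"
    unfolding e1 e2 GE_iff by simp
qed

lemma walk_exists:
  assumes "x < n" "y < n"
  shows "\<exists>ws. is_walk (box_V Pinf_V (K_V n)) GE ws \<and> hd ws = (a, x) \<and> last ws = (b, y)
     \<and> length ws - 1 = pd (a, x) (b, y)"
proof -
  obtain ws where ws: "is_walk (box_V Pinf_V (K_V n)) GE ws" "hd ws = (a, x)" "last ws = (b, x)"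
    "length ws - 1 = max a b - min a b"
  proof (cases "a \<le> b")
    case True
    show ?thesis
      by (rule that[OF walk_up[OF True assms(1)]]) (use True in \<open>auto simp del: upt_Suc simp: hd_map last_map\<close>)
  next
    case False
    then have F: "b \<le> a" by simp
    show ?thesis
      by (rule that[OF walk_down[OF F assms(1)]]) (use F in \<open>auto simp del: upt_Suc simp: hd_map last_map\<close>)
  qed
  show ?thesis
  proof (cases "x = y")
    case True
    then show ?thesis using ws by (auto simp: pd_def)
  next
    case False
    have "is_walk (box_V Pinf_V (K_V n)) GE (ws @ [(b, y)])"
      apply (rule walk_snoc[OF ws(1)])
      using assms False ws(3) by (auto simp: box_V_def Pinf_V_def K_V_def GE_iff)
    moreover obtain k where "length ws = Suc k" using ws(1) by (cases ws) (auto simp: is_walk_def)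
    ultimately show ?thesis using ws False
      by (intro exI[of _ "ws @ [(b, y)]"]) (auto simp: pd_def hd_append)
  qed
qed

lemma gdist_eq:
  assumes "p \<in> box_V Pinf_V (K_V n)" "q \<in> box_V Pinf_V (K_V n)"
  shows "gdist (box_V Pinf_V (K_V n)) GE p q = enat (pd p q)"
proof -
  obtain a x b y where p: "p = (a, x)" and q: "q = (b, y)" by (cases p, cases q) auto
  have xy: "x < n" "y < n" using assms p q by (auto simp: box_V_def K_V_def)
  obtain ws where ws: "is_walk (box_V Pinf_V (K_V n)) GE ws" "hd ws = p" "last ws = q"
     "length ws - 1 = pd p q"
    using walk_exists[OF xy, of a b] p q by blast
  show ?thesis unfolding gdist_def
  proof (rule antisym)
    show "(INF ws\<in>{ws. is_walk (box_V Pinf_V (K_V n)) GE ws \<and> hd ws = p \<and> last ws = q}. enat (length ws - 1)) \<le> enat (pd p q)"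
      using ws by (metis (mono_tags, lifting) INF_lower mem_Collect_eq)
    show "enat (pd p q) \<le> (INF ws\<in>{ws. is_walk (box_V Pinf_V (K_V n)) GE ws \<and> hd ws = p \<and> last ws = q}. enat (length ws - 1))"
      by (rule INF_greatest) (use walk_lower in fastforce)
  qed
qed

lemma lower:
  assumes "resolving_set (box_V Pinf_V (K_V n)) GE W" "finite W" "n \<ge> 1"
  shows "n - 1 \<le> card W"
proof -
  let ?V = "box_V Pinf_V (K_V n)"
  have WV: "W \<subseteq> ?V" using assms(1) by (simp add: resolving_set_def)
  let ?C = "snd ` W"
  have C: "?C \<subseteq> {0..<n}" using WV by (auto simp: box_V_def K_V_def)
  have D: "card ({0..<n} - ?C) \<le> Suc 0"
  proof (rule iffD2[OF card_le_Suc0_iff_eq], simp, intro ballI)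
    fix x y assume xy: "x \<in> {0..<n} - ?C" "y \<in> {0..<n} - ?C"
    show "x = y"
    proof (rule ccontr)
      assume "x \<noteq> y"
      have in1: "(0, x) \<in> ?V" "(0, y) \<in> ?V" using xy by (auto simp: box_V_def K_V_def Pinf_V_def)
      then obtain w where w: "w \<in> W" "resolves ?V GE w (0, x) (0, y)"
        using assms(1) \<open>x \<noteq> y\<close> unfolding resolving_set_def by blast
      have "w \<in> ?V" using w WV by auto
      moreover have "snd w \<noteq> x" "snd w \<noteq> y" using xy w by auto
      ultimately show False using w(2) in1
        by (simp add: resolves_def gdist_eq pd_def)
    qed
  qed
  have "card {0..<n::nat} = card ?C + card ({0..<n} - ?C)"
    using C card_Diff_subset[of ?C "{0..<n}"] card_mono[OF _ C] by (simp add: finite_subset[OF C])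
  then have "n \<le> card ?C + 1" using D by simp
  moreover have "card ?C \<le> card W" by (rule card_image_le[OF assms(2)])
  ultimately show ?thesis by simp
qed

theorem proposition8:
  fixes n :: nat
  assumes "n \<ge> 4"
  shows "metric_dim (box_V Pinf_V (K_V n)) (box_E Pinf_E K_E) = enat (n - 1)
    \<and> metric_basis (box_V Pinf_V (K_V n)) (box_E Pinf_E K_E) {(0, j) | j. j \<le> n - 2}"
proof -
  let ?V = "box_V Pinf_V (K_V n)"
  let ?S = "{(0::nat, j) | j. j \<le> n - 2}"
  have Seq: "?S = (\<lambda>j. (0, j)) ` {..n-2}" by auto
  have finS: "finite ?S" unfolding Seq by simp
  have cardS: "card ?S = n - 1" unfolding Seq using assms
    by (subst card_image) (auto simp: inj_on_def)
  have res: "resolving_set ?V GE ?S"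
    unfolding resolving_set_def
  proof (intro conjI ballI impI)
    show "?S \<subseteq> ?V" using assms by (auto simp: box_V_def K_V_def Pinf_V_def)
    fix u v assume uv: "u \<in> ?V" "v \<in> ?V" "u \<noteq> v"
    obtain a x b y where u: "u = (a, x)" and v: "v = (b, y)" by (cases u, cases v) auto
    have xy: "x < n" "y < n" using uv u v by (auto simp: box_V_def K_V_def)
    have inV: "\<And>j. j \<le> n - 2 \<Longrightarrow> (0, j) \<in> ?V" using assms by (auto simp: box_V_def K_V_def Pinf_V_def)
    have key: "\<exists>j \<le> n - 2. pd (a, x) (0, j) \<noteq> pd (b, y) (0, j)"
    proof (cases "a = b")
      case True
      then have "x \<noteq> y" using uv u v by auto
      show ?thesis
      proof (cases "x \<le> n - 2")
        case True
        then show ?thesis using \<open>x \<noteq> y\<close> \<open>a = b\<close> by (intro exI[of _ x]) (auto simp: pd_def)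
      next
        case False
        then have "y \<le> n - 2" using xy \<open>x \<noteq> y\<close> by linarith
        then show ?thesis using \<open>x \<noteq> y\<close> \<open>a = b\<close> by (intro exI[of _ y]) (auto simp: pd_def)
      qed
    next
      case False
      have "\<exists>j \<le> n - 2. j \<noteq> x \<and> j \<noteq> y"
      proof -
        have "card ({..n-2} - {x, y}) \<ge> 1"
        proof -
          have "card {..n-2} - card {x,y} \<le> card ({..n-2} - {x, y})"
            by (rule diff_card_le_card_Diff) simp
          moreover have "card {x, y} \<le> 2" by (simp add: card_insert_le_m1)
          ultimately show ?thesis using assms by simp
        qed
        then obtain j where "j \<in> {..n-2} - {x, y}"
          by (metis card.empty ex_in_conv not_one_le_zero)
        then show ?thesis by auto
      qed
      then obtain j where j: "j \<le> n - 2" "j \<noteq> x" "j \<noteq> y" by blast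
      show ?thesis using False j by (intro exI[of _ j]) (auto simp: pd_def)
    qed
    then obtain j where j: "j \<le> n - 2" "pd (a, x) (0, j) \<noteq> pd (b, y) (0, j)" by blast
    show "\<exists>w\<in>?S. resolves ?V GE w u v"
      apply (rule bexI[of _ "(0, j)"])
      using j uv u v inV[OF j(1)] by (auto simp: resolves_def gdist_eq)
  qed
  have md: "metric_dim ?V GE = enat (n - 1)"
    unfolding metric_dim_def
  proof (rule antisym)
    show "(INF W\<in>{W. resolving_set ?V GE W \<and> finite W}. enat (card W)) \<le> enat (n - 1)"
      using res finS cardS by (metis (mono_tags, lifting) INF_lower mem_Collect_eq)
    show "enat (n - 1) \<le> (INF W\<in>{W. resolving_set ?V GE W \<and> finite W}. enat (card W))"
      by (rule INF_greatest) (use lower assms in auto)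
  qed
  show ?thesis using md res finS cardS by (simp add: metric_basis_def)
qed

end
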